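(* Let $\Gamma\subseteq\mathit{Aff}(2,\mathbb{H})$ be a subgroup acting freely on $\mathbb{H}^2$. Then $\Gamma$ is conjugate in $\mathit{Aff}(2,\mathbb{H})$ to a subgroup of $G_1$ or of $G_2$.
   Context: $\mathit{Aff}(2,\mathbb{H})$ is identified with invertible $3\times3$ quaternionic matrices $\begin{pmatrix} a&b&r\\ c&d&s\\ 0&0&1\end{pmatrix}$ acting on $(x,y)\in\mathbb{H}^2$ by $(x,y)\mapsto(ax+by+r,cx+dy+s)$. $G_1=\left\{\begin{pmatrix} a&b&r\\ 0&1&s\\ 0&0&1\end{pmatrix}: a,b,r,s\in\mathbb{H}, a\neq0\right\}$ and $G_2=\left\{\begin{pmatrix} 1&b&r\\ 0&d&s\\ 0&0&1\end{pmatrix}: b,r,s,d\in\mathbb{H}, d\neq0\right\}$. *)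

theory Defs
  imports Complex_Main "HOL-Algebra.Group"
begin

datatype quat = Quat (Re: real) (Im1: real) (Im2: real) (Im3: real)

lemma quat_eqI: "Re x = Re y \<Longrightarrow> Im1 x = Im1 y \<Longrightarrow> Im2 x = Im2 y \<Longrightarrow> Im3 x = Im3 y \<Longrightarrow> x = y"
  by (cases x; cases y) auto

instantiation quat :: ring_1
begin

definition "0 = Quat 0 0 0 0"
definition "1 = Quat 1 0 0 0"
definition "x + y = Quat (Re x + Re y) (Im1 x + Im1 y) (Im2 x + Im2 y) (Im3 x + Im3 y)"
definition "x - y = Quat (Re x - Re y) (Im1 x - Im1 y) (Im2 x - Im2 y) (Im3 x - Im3 y)"
definition "- x = Quat (- Re x) (- Im1 x) (- Im2 x) (- Im3 x)"
definition "x * y = Quat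
   (Re x * Re y - Im1 x * Im1 y - Im2 x * Im2 y - Im3 x * Im3 y)
   (Re x * Im1 y + Im1 x * Re y + Im2 x * Im3 y - Im3 x * Im2 y)
   (Re x * Im2 y - Im1 x * Im3 y + Im2 x * Re y + Im3 x * Im1 y)
   (Re x * Im3 y + Im1 x * Im2 y - Im2 x * Im1 y + Im3 x * Re y)"

instance
  by intro_classes
     (auto intro!: quat_eqI simp: zero_quat_def one_quat_def plus_quat_def minus_quat_def
        uminus_quat_def times_quat_def algebra_simps)

end

text \<open>An element of Aff(2,H) is the quaternionic 3x3 matrix
  ((a, b, r), (c, d, s), (0, 0, 1)), recorded by its six entries.\<close>

record affm =
  ma :: quat
  mb :: quat
  mc :: quat
  md :: quat
  mr :: quat
  ms :: quat

definition aff_apply :: "affm \<Rightarrow> quat \<times> quat \<Rightarrow> quat \<times> quat" where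
  "aff_apply g p = (ma g * fst p + mb g * snd p + mr g, mc g * fst p + md g * snd p + ms g)"

text \<open>Matrix product of two such 3x3 matrices.\<close>
definition aff_mult :: "affm \<Rightarrow> affm \<Rightarrow> affm" where
  "aff_mult g h = \<lparr> ma = ma g * ma h + mb g * mc h,
                   mb = ma g * mb h + mb g * md h,
                   mc = mc g * ma h + md g * mc h,
                   md = mc g * mb h + md g * md h,
                   mr = ma g * mr h + mb g * ms h + mr g,
                   ms = mc g * mr h + md g * ms h + ms g \<rparr>"

definition aff_one :: affm where
  "aff_one = \<lparr> ma = 1, mb = 0, mc = 0, md = 1, mr = 0, ms = 0 \<rparr>"

definition Aff2H :: "affm set" where
  "Aff2H = {g. \<exists>h. aff_mult g h = aff_one \<and> aff_mult h g = aff_one}"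

definition Aff2H_group :: "affm monoid" where
  "Aff2H_group = \<lparr> carrier = Aff2H, mult = aff_mult, one = aff_one \<rparr>"

definition G1 :: "affm set" where
  "G1 = {g. ma g \<noteq> 0 \<and> mc g = 0 \<and> md g = 1}"

definition G2 :: "affm set" where
  "G2 = {g. ma g = 1 \<and> mc g = 0 \<and> md g \<noteq> 0}"

definition acts_freely :: "affm set \<Rightarrow> bool" where
  "acts_freely \<Gamma> \<longleftrightarrow> (\<forall>g\<in>\<Gamma>. \<forall>p. aff_apply g p = p \<longrightarrow> g = aff_one)"

end

theory Submission
  imports Defs
begin

lemma quat_normsq_nz:
  assumes "(x::quat) \<noteq> 0"
  shows "(Re x)^2 + (Im1 x)^2 + (Im2 x)^2 + (Im3 x)^2 \<noteq> 0"
proof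
  assume h: "(Re x)^2 + (Im1 x)^2 + (Im2 x)^2 + (Im3 x)^2 = 0"
  have "(Re x)^2 = 0" "(Im1 x)^2 = 0" "(Im2 x)^2 = 0" "(Im3 x)^2 = 0"
    using h by (smt (verit) zero_le_power2)+
  hence "Re x = 0" "Im1 x = 0" "Im2 x = 0" "Im3 x = 0" by simp_all
  hence "x = 0" by (intro quat_eqI) (auto simp: zero_quat_def)
  with assms show False by simp
qed

instantiation quat :: division_ring
begin

definition inverse_quat :: "quat \<Rightarrow> quat" where
  "inverse_quat x = (let n = (Re x)^2 + (Im1 x)^2 + (Im2 x)^2 + (Im3 x)^2 in
     Quat (Re x / n) (- Im1 x / n) (- Im2 x / n) (- Im3 x / n))"

definition divide_quat :: "quat \<Rightarrow> quat \<Rightarrow> quat" where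
  "divide_quat x y = x * inverse y"

instance
proof
  fix a :: quat
  assume a: "a \<noteq> 0"
  define n where "n = (Re a)^2 + (Im1 a)^2 + (Im2 a)^2 + (Im3 a)^2"
  have n: "n \<noteq> 0" using quat_normsq_nz[OF a] by (simp add: n_def)
  have inv: "inverse a = Quat (Re a / n) (- Im1 a / n) (- Im2 a / n) (- Im3 a / n)"
    by (simp add: inverse_quat_def n_def Let_def)
  have e: "Re a * Re a + Im1 a * Im1 a + Im2 a * Im2 a + Im3 a * Im3 a = n"
    by (simp add: n_def power2_eq_square)
  show "inverse a * a = 1"
  proof (rule quat_eqI)
    show "Re (inverse a * a) = Re 1" unfolding inv times_quat_def one_quat_def
      using n e by (simp add: divide_simps; simp add: algebra_simps)
    show "Im1 (inverse a * a) = Im1 1" unfolding inv times_quat_def one_quat_def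
      using n by (simp add: divide_simps; simp add: algebra_simps)
    show "Im2 (inverse a * a) = Im2 1" unfolding inv times_quat_def one_quat_def
      using n by (simp add: divide_simps; simp add: algebra_simps)
    show "Im3 (inverse a * a) = Im3 1" unfolding inv times_quat_def one_quat_def
      using n by (simp add: divide_simps; simp add: algebra_simps)
  qed
  show "a * inverse a = 1"
  proof (rule quat_eqI)
    show "Re (a * inverse a) = Re 1" unfolding inv times_quat_def one_quat_def
      using n e by (simp add: divide_simps; simp add: algebra_simps)
    show "Im1 (a * inverse a) = Im1 1" unfolding inv times_quat_def one_quat_def
      using n by (simp add: divide_simps; simp add: algebra_simps)
    show "Im2 (a * inverse a) = Im2 1" unfolding inv times_quat_def one_quat_def
      using n by (simp add: divide_simps; simp add: algebra_simps)
    show "Im3 (a * inverse a) = Im3 1" unfolding inv times_quat_def one_quat_def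
      using n by (simp add: divide_simps; simp add: algebra_simps)
  qed
next
  fix a b :: quat
  show "divide a b = a * inverse b" by (simp add: divide_quat_def)
next
  show "inverse (0::quat) = 0"
    by (intro quat_eqI) (simp_all add: inverse_quat_def zero_quat_def)
qed

end

lemma aff_mult_assoc: "aff_mult (aff_mult x y) z = aff_mult x (aff_mult y z)"
  by (simp add: aff_mult_def algebra_simps)

lemma aff_one_l: "aff_mult aff_one x = x"
  by (simp add: aff_mult_def aff_one_def)

lemma aff_one_r: "aff_mult x aff_one = x"
  by (simp add: aff_mult_def aff_one_def)

lemma Aff2H_group_is_group: "group Aff2H_group"
proof (rule groupI)
  fix x y assume "x \<in> carrier Aff2H_group" "y \<in> carrier Aff2H_group"
  then obtain x' y' where x': "aff_mult x x' = aff_one" "aff_mult x' x = aff_one"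
    and y': "aff_mult y y' = aff_one" "aff_mult y' y = aff_one"
    by (auto simp: Aff2H_group_def Aff2H_def)
  have "aff_mult (aff_mult x y) (aff_mult y' x') = aff_one"
    by (metis aff_mult_assoc aff_one_l x'(1) y'(1))
  moreover have "aff_mult (aff_mult y' x') (aff_mult x y) = aff_one"
    by (metis aff_mult_assoc aff_one_l x'(2) y'(2))
  ultimately show "x \<otimes>\<^bsub>Aff2H_group\<^esub> y \<in> carrier Aff2H_group"
    by (auto simp: Aff2H_group_def Aff2H_def)
next
  show "\<one>\<^bsub>Aff2H_group\<^esub> \<in> carrier Aff2H_group"
    by (auto simp: Aff2H_group_def Aff2H_def aff_one_l)
next
  fix x y z
  show "x \<otimes>\<^bsub>Aff2H_group\<^esub> y \<otimes>\<^bsub>Aff2H_group\<^esub> z = x \<otimes>\<^bsub>Aff2H_group\<^esub> (y \<otimes>\<^bsub>Aff2H_group\<^esub> z)"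
    by (simp add: Aff2H_group_def aff_mult_assoc)
next
  fix x show "\<one>\<^bsub>Aff2H_group\<^esub> \<otimes>\<^bsub>Aff2H_group\<^esub> x = x"
    by (simp add: Aff2H_group_def aff_one_l)
next
  fix x assume "x \<in> carrier Aff2H_group"
  then obtain x' where x': "aff_mult x x' = aff_one" "aff_mult x' x = aff_one"
    by (auto simp: Aff2H_group_def Aff2H_def)
  hence "x' \<in> carrier Aff2H_group" by (auto simp: Aff2H_group_def Aff2H_def)
  with x' show "\<exists>y\<in>carrier Aff2H_group. y \<otimes>\<^bsub>Aff2H_group\<^esub> x = \<one>\<^bsub>Aff2H_group\<^esub>"
    by (auto simp: Aff2H_group_def)
qed

lemma Aff2H_inv:
  assumes "aff_mult h h' = aff_one" "aff_mult h' h = aff_one"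
  shows "h \<in> Aff2H" "h' \<in> Aff2H" "inv\<^bsub>Aff2H_group\<^esub> h = h'"
proof -
  show h: "h \<in> Aff2H" "h' \<in> Aff2H" using assms by (auto simp: Aff2H_def)
  show "inv\<^bsub>Aff2H_group\<^esub> h = h'"
    using group.inv_equality[OF Aff2H_group_is_group, of h' h] h assms
    by (simp add: Aff2H_group_def)
qed

definition lin :: "affm \<Rightarrow> quat \<times> quat \<Rightarrow> quat \<times> quat" where
  "lin g x = (ma g * fst x + mb g * snd x, mc g * fst x + md g * snd x)"

lemma lin_mult: "lin (aff_mult g h) x = lin g (lin h x)"
  by (simp add: lin_def aff_mult_def algebra_simps)

lemma lin_one: "lin aff_one x = x"
  by (simp add: lin_def aff_one_def)

lemma lin_e1: "lin g (1,0) = (ma g, mc g)" by (simp add: lin_def)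
lemma lin_e2: "lin g (0,1) = (mb g, md g)" by (simp add: lin_def)

lemma lin_add: "lin g (x1 + y1, x2 + y2) = (fst (lin g (x1,x2)) + fst (lin g (y1,y2)),
    snd (lin g (x1,x2)) + snd (lin g (y1,y2)))"
  by (simp add: lin_def algebra_simps)

lemma lin_smul: "lin g (x1 * k, x2 * k) = (fst (lin g (x1,x2)) * k, snd (lin g (x1,x2)) * k)"
  by (simp add: lin_def algebra_simps)

section \<open>Quaternionic linear algebra in dimension 2\<close>

lemma mul_right_cancel_inv: "(b::quat) \<noteq> 0 \<Longrightarrow> a * b * inverse b = a"
  by (simp add: mult.assoc)

lemma indep2:
  fixes y1 y2 z1 z2 \<alpha> \<beta> :: quat
  assumes y: "y1 \<noteq> 0 \<or> y2 \<noteq> 0" and nz: "\<not>(\<exists>\<mu>. z1 = y1*\<mu> \<and> z2 = y2*\<mu>)"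
    and e1: "y1*\<alpha> + z1*\<beta> = 0" and e2: "y2*\<alpha> + z2*\<beta> = 0"
  shows "\<alpha> = 0 \<and> \<beta> = 0"
proof -
  have b: "\<beta> = 0"
  proof (rule ccontr)
    assume b: "\<beta> \<noteq> 0"
    have "z1 = y1 * (- (\<alpha> * inverse \<beta>))"
    proof -
      have "z1*\<beta> = - (y1*\<alpha>)" using e1 by (simp add: eq_neg_iff_add_eq_0 add.commute)
      hence "z1*\<beta>*inverse \<beta> = - (y1*\<alpha>) * inverse \<beta>" by simp
      thus ?thesis using b by (simp add: mult.assoc)
    qed
    moreover have "z2 = y2 * (- (\<alpha> * inverse \<beta>))"
    proof -
      have "z2*\<beta> = - (y2*\<alpha>)" using e2 by (simp add: eq_neg_iff_add_eq_0 add.commute)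
      hence "z2*\<beta>*inverse \<beta> = - (y2*\<alpha>) * inverse \<beta>" by simp
      thus ?thesis using b by (simp add: mult.assoc)
    qed
    ultimately show False using nz by blast
  qed
  with e1 e2 have "y1*\<alpha> = 0" "y2*\<alpha> = 0" by simp_all
  with y have "\<alpha> = 0" by auto
  with b show ?thesis by simp
qed

lemma par2:
  fixes f1 f2 g1 g2 x1 x2 :: quat
  assumes f: "f1 \<noteq> 0 \<or> f2 \<noteq> 0" and x: "x1 \<noteq> 0 \<or> x2 \<noteq> 0"
    and e1: "f1*x1 + f2*x2 = 0" and e2: "g1*x1 + g2*x2 = 0"
  shows "\<exists>lam. g1 = lam*f1 \<and> g2 = lam*f2"
proof (cases "x1 = 0")
  case True
  with x have x2: "x2 \<noteq> 0" by simp
  from True e1 x2 have f2: "f2 = 0" by simp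
  from True e2 x2 have g2: "g2 = 0" by simp
  from f f2 have f1: "f1 \<noteq> 0" by simp
  show ?thesis
    by (rule exI[of _ "g1 * inverse f1"]) (simp add: f1 f2 g2 mult.assoc)
next
  case False
  have ff: "f1 = - (f2*x2*inverse x1)"
  proof -
    have "f1*x1 = - (f2*x2)" using e1 by (simp add: eq_neg_iff_add_eq_0)
    hence "f1*x1*inverse x1 = - (f2*x2)*inverse x1" by simp
    thus ?thesis using False by (simp add: mult.assoc)
  qed
  have gg: "g1 = - (g2*x2*inverse x1)"
  proof -
    have "g1*x1 = - (g2*x2)" using e2 by (simp add: eq_neg_iff_add_eq_0)
    hence "g1*x1*inverse x1 = - (g2*x2)*inverse x1" by simp
    thus ?thesis using False by (simp add: mult.assoc)
  qed
  have f2: "f2 \<noteq> 0" using f ff by auto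
  show ?thesis
  proof (rule exI[of _ "g2 * inverse f2"], intro conjI)
    have iw: "inverse f2 * (f2 * w) = w" for w using f2 by (simp add: mult.assoc[symmetric])
    show "g1 = g2 * inverse f2 * f1" using f2 ff gg by (simp add: mult.assoc iw)
    show "g2 = g2 * inverse f2 * f2" using f2 by (simp add: mult.assoc)
  qed
qed

lemma solve2_aux:
  fixes n11 n12 n21 n22 t1 t2 :: quat
  assumes inj: "\<And>x1 x2. n11*x1 + n12*x2 = 0 \<Longrightarrow> n21*x1 + n22*x2 = 0 \<Longrightarrow> x1 = 0 \<and> x2 = 0"
    and n11: "n11 \<noteq> 0"
  shows "\<exists>x1 x2. n11*x1 + n12*x2 = t1 \<and> n21*x1 + n22*x2 = t2"
proof -
  define k where "k = n22 - n21 * inverse n11 * n12"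
  have k: "k \<noteq> 0"
  proof
    assume k0: "k = 0"
    have "n11 * (- (inverse n11 * n12)) + n12 * 1 = 0"
      using n11 by (simp add: mult.assoc[symmetric])
    moreover have "n21 * (- (inverse n11 * n12)) + n22 * 1 = 0"
      using k0 by (simp add: k_def mult.assoc)
    ultimately show False using inj by fastforce
  qed
  define x2 where "x2 = inverse k * (t2 - n21 * inverse n11 * t1)"
  define x1 where "x1 = inverse n11 * (t1 - n12 * x2)"
  have "n11*x1 + n12*x2 = t1"
    using n11 by (simp add: x1_def mult.assoc[symmetric])
  moreover have "n21*x1 + n22*x2 = t2"
  proof -
    have "n21*x1 + n22*x2 = n21 * inverse n11 * t1 + k * x2"
      by (simp add: x1_def k_def algebra_simps)
    also have "k * x2 = t2 - n21 * inverse n11 * t1"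
      using k by (simp add: x2_def mult.assoc[symmetric])
    finally show ?thesis by simp
  qed
  ultimately show ?thesis by blast
qed

lemma solve2:
  fixes n11 n12 n21 n22 t1 t2 :: quat
  assumes inj: "\<And>x1 x2. n11*x1 + n12*x2 = 0 \<Longrightarrow> n21*x1 + n22*x2 = 0 \<Longrightarrow> x1 = 0 \<and> x2 = 0"
  shows "\<exists>x1 x2. n11*x1 + n12*x2 = t1 \<and> n21*x1 + n22*x2 = t2"
proof (cases "n11 = 0")
  case False
  show ?thesis by (rule solve2_aux[OF inj False])
next
  case True
  have n21: "n21 \<noteq> 0"
  proof
    assume "n21 = 0"
    with True inj[of 1 0] show False by simp
  qed
  have "\<exists>x1 x2. n21*x1 + n22*x2 = t2 \<and> n11*x1 + n12*x2 = t1"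
    by (rule solve2_aux[OF _ n21]) (use inj in blast)
  thus ?thesis by blast
qed

section \<open>Fixed vectors and rank one decomposition\<close>

definition fixv :: "affm \<Rightarrow> quat \<Rightarrow> quat \<Rightarrow> bool" where
  "fixv g u1 u2 \<longleftrightarrow> ma g*u1 + mb g*u2 = u1 \<and> mc g*u1 + md g*u2 = u2"

definition islid :: "affm \<Rightarrow> bool" where
  "islid g \<longleftrightarrow> ma g = 1 \<and> mb g = 0 \<and> mc g = 0 \<and> md g = 1"

definition rank1 :: "affm \<Rightarrow> quat \<Rightarrow> quat \<Rightarrow> quat \<Rightarrow> quat \<Rightarrow> bool" where
  "rank1 g y1 y2 f1 f2 \<longleftrightarrow> ma g = 1 + y1*f1 \<and> mb g = y1*f2 \<and> mc g = y2*f1 \<and> md g = 1 + y2*f2"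

lemma fixed_vec:
  assumes fr: "acts_freely \<Gamma>" and g: "g \<in> \<Gamma>"
  shows "\<exists>u1 u2. (u1 \<noteq> 0 \<or> u2 \<noteq> 0) \<and> fixv g u1 u2"
proof (rule ccontr)
  assume no: "\<not> ?thesis"
  have inj: "x1 = 0 \<and> x2 = 0"
    if "(ma g - 1)*x1 + mb g*x2 = 0" "mc g*x1 + (md g - 1)*x2 = 0" for x1 x2
  proof -
    have "fixv g x1 x2" using that by (simp add: fixv_def algebra_simps)
    thus ?thesis using no by blast
  qed
  obtain x1 x2 where x: "(ma g - 1)*x1 + mb g*x2 = - mr g" "mc g*x1 + (md g - 1)*x2 = - ms g"
    using solve2[of "ma g - 1" "mb g" "mc g" "md g - 1", OF inj] by blast
  have "aff_apply g (x1,x2) = (x1,x2)"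
    using x by (simp add: aff_apply_def algebra_simps eq_neg_iff_add_eq_0)
  hence "g = aff_one" using fr g by (auto simp: acts_freely_def)
  hence "fixv g 1 0" by (simp add: fixv_def aff_one_def)
  thus False using no by force
qed

lemma rank1_ex:
  assumes fx: "fixv g u1 u2" and u: "u1 \<noteq> 0 \<or> u2 \<noteq> 0" and nid: "\<not> islid g"
  shows "\<exists>y1 y2 f1 f2. (y1 \<noteq> 0 \<or> y2 \<noteq> 0) \<and> (f1 \<noteq> 0 \<or> f2 \<noteq> 0) \<and> rank1 g y1 y2 f1 f2"
proof -
  have r1: "(ma g - 1)*u1 + mb g*u2 = 0" and r2: "mc g*u1 + (md g - 1)*u2 = 0"
    using fx by (simp_all add: fixv_def algebra_simps)
  show ?thesis
  proof (cases "ma g - 1 \<noteq> 0 \<or> mb g \<noteq> 0")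
    case True
    obtain lam where lam: "mc g = lam*(ma g - 1)" "md g - 1 = lam * mb g"
      using par2[OF True u r1 r2] by blast
    have r: "rank1 g 1 lam (ma g - 1) (mb g)"
      using lam by (simp add: rank1_def algebra_simps)
    show ?thesis
      by (rule exI[of _ 1], rule exI[of _ lam], rule exI[of _ "ma g - 1"], rule exI[of _ "mb g"])
        (use True r in simp)
  next
    case False
    hence f: "mc g \<noteq> 0 \<or> md g - 1 \<noteq> 0" using nid by (auto simp: islid_def)
    have "rank1 g 0 1 (mc g) (md g - 1)"
      using False by (simp add: rank1_def)
    show ?thesis
      by (rule exI[of _ 0], rule exI[of _ 1], rule exI[of _ "mc g"], rule exI[of _ "md g - 1"])
        (use f \<open>rank1 g 0 1 (mc g) (md g - 1)\<close> in simp)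
  qed
qed

lemma rank1_N:
  assumes "rank1 g y1 y2 f1 f2"
  shows "ma g*x1 + mb g*x2 - x1 = y1*(f1*x1 + f2*x2)"
    "mc g*x1 + md g*x2 - x2 = y2*(f1*x1 + f2*x2)"
  using assms by (simp_all add: rank1_def algebra_simps)

lemma rank1_fixv:
  assumes "rank1 g y1 y2 f1 f2" "y1 \<noteq> 0 \<or> y2 \<noteq> 0"
  shows "fixv g u1 u2 \<longleftrightarrow> f1*u1 + f2*u2 = 0"
proof -
  have "fixv g u1 u2 \<longleftrightarrow> y1*(f1*u1 + f2*u2) = 0 \<and> y2*(f1*u1 + f2*u2) = 0"
    using rank1_N[OF assms(1), of u1 u2] unfolding fixv_def
    by (metis eq_iff_diff_eq_0)
  thus ?thesis using assms(2) by auto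
qed

lemma pairwise:
  assumes A: "rank1 g y1 y2 f1 f2" and B: "rank1 h z1 z2 p1 p2"
    and y: "y1 \<noteq> 0 \<or> y2 \<noteq> 0" and f: "f1 \<noteq> 0 \<or> f2 \<noteq> 0"
    and fx: "fixv (aff_mult g h) x1 x2" and x: "x1 \<noteq> 0 \<or> x2 \<noteq> 0"
  shows "(\<exists>\<mu>. z1 = y1*\<mu> \<and> z2 = y2*\<mu>) \<or> (\<exists>lam. p1 = lam*f1 \<and> p2 = lam*f2)"
proof (cases "\<exists>\<mu>. z1 = y1*\<mu> \<and> z2 = y2*\<mu>")
  case True thus ?thesis by blast
next
  case False
  note nz = False
  define P where "P = p1*x1 + p2*x2"
  define F where "F = f1*x1 + f2*x2"
  have h1: "ma h*x1 + mb h*x2 = x1 + z1*P" using rank1_N(1)[OF B, of x1 x2] P_def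
    by (metis add.commute diff_add_cancel)
  have h2: "mc h*x1 + md h*x2 = x2 + z2*P" using rank1_N(2)[OF B, of x1 x2] P_def
    by (metis add.commute diff_add_cancel)
  have phi: "f1*(x1 + z1*P) + f2*(x2 + z2*P) = F + (f1*z1 + f2*z2)*P"
    by (simp add: F_def distrib_left distrib_right mult.assoc add_ac)
  have c1: "ma (aff_mult g h)*x1 + mb (aff_mult g h)*x2 = ma g*(ma h*x1 + mb h*x2) + mb g*(mc h*x1 + md h*x2)"
    by (simp add: aff_mult_def distrib_left distrib_right mult.assoc add_ac)
  have c2: "mc (aff_mult g h)*x1 + md (aff_mult g h)*x2 = mc g*(ma h*x1 + mb h*x2) + md g*(mc h*x1 + md h*x2)"
    by (simp add: aff_mult_def distrib_left distrib_right mult.assoc add_ac)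
  have g1: "ma g*(x1 + z1*P) + mb g*(x2 + z2*P) = (x1 + z1*P) + y1*(F + (f1*z1 + f2*z2)*P)"
    using rank1_N(1)[OF A, of "x1 + z1*P" "x2 + z2*P"] phi by (metis add.commute diff_add_cancel)
  have g2: "mc g*(x1 + z1*P) + md g*(x2 + z2*P) = (x2 + z2*P) + y2*(F + (f1*z1 + f2*z2)*P)"
    using rank1_N(2)[OF A, of "x1 + z1*P" "x2 + z2*P"] phi by (metis add.commute diff_add_cancel)
  have e1: "y1*(F + (f1*z1 + f2*z2)*P) + z1*P = 0"
    using fx c1 h1 h2 g1 unfolding fixv_def by (simp add: add.assoc[symmetric]) (simp add: add_ac)
  have e2: "y2*(F + (f1*z1 + f2*z2)*P) + z2*P = 0"
    using fx c2 h1 h2 g2 unfolding fixv_def by (simp add: add.assoc[symmetric]) (simp add: add_ac)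
  from indep2[OF y nz e1 e2] have "F = 0" "P = 0" by auto
  show ?thesis
    using par2[OF f x, of p1 p2] \<open>F = 0\<close> \<open>P = 0\<close> unfolding F_def P_def by blast
qed

section \<open>A common fixed vector or a common image line\<close>

lemma islid_fixv: "islid g \<Longrightarrow> fixv g u1 u2"
  by (simp add: islid_def fixv_def)

lemma common:
  assumes fr: "acts_freely \<Gamma>" and cl: "\<And>g h. g \<in> \<Gamma> \<Longrightarrow> h \<in> \<Gamma> \<Longrightarrow> aff_mult g h \<in> \<Gamma>"
  shows "\<exists>u1 u2. (u1 \<noteq> 0 \<or> u2 \<noteq> 0) \<and> ((\<forall>g\<in>\<Gamma>. fixv g u1 u2) \<or>
     (\<forall>g\<in>\<Gamma>. \<forall>x1 x2. \<exists>lam. ma g*x1 + mb g*x2 - x1 = u1*lam \<and> mc g*x1 + md g*x2 - x2 = u2*lam))"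
proof (cases "\<forall>g\<in>\<Gamma>. islid g")
  case True
  hence "\<forall>g\<in>\<Gamma>. fixv g 1 0" by (simp add: islid_fixv)
  thus ?thesis by (intro exI[of _ 1] exI[of _ 0]) simp
next
  case False
  then obtain A where A: "A \<in> \<Gamma>" "\<not> islid A" by blast
  obtain u1 u2 where u: "u1 \<noteq> 0 \<or> u2 \<noteq> 0" and fu: "fixv A u1 u2"
    using fixed_vec[OF fr A(1)] by blast
  obtain y1 y2 f1 f2 where y: "y1 \<noteq> 0 \<or> y2 \<noteq> 0" and f: "f1 \<noteq> 0 \<or> f2 \<noteq> 0"
    and rA: "rank1 A y1 y2 f1 f2"
    using rank1_ex[OF fu u A(2)] by blast
  have phiu: "f1*u1 + f2*u2 = 0" using rank1_fixv[OF rA y] fu by simp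
  show ?thesis
  proof (cases "\<forall>g\<in>\<Gamma>. fixv g u1 u2")
    case True
    with u show ?thesis by blast
  next
    case False
    then obtain B where B: "B \<in> \<Gamma>" "\<not> fixv B u1 u2" by blast
    have nB: "\<not> islid B" using B(2) islid_fixv by blast
    obtain v1 v2 where v: "v1 \<noteq> 0 \<or> v2 \<noteq> 0" and fv: "fixv B v1 v2"
      using fixed_vec[OF fr B(1)] by blast
    obtain z1 z2 p1 p2 where z: "z1 \<noteq> 0 \<or> z2 \<noteq> 0" and p: "p1 \<noteq> 0 \<or> p2 \<noteq> 0"
      and rB: "rank1 B z1 z2 p1 p2"
      using rank1_ex[OF fv v nB] by blast
    have Bu: "p1*u1 + p2*u2 \<noteq> 0" using rank1_fixv[OF rB z] B(2) by simp
    obtain x1 x2 where x: "x1 \<noteq> 0 \<or> x2 \<noteq> 0" and fx: "fixv (aff_mult A B) x1 x2"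
      using fixed_vec[OF fr cl[OF A(1) B(1)]] by blast
    have "\<not> (\<exists>lam. p1 = lam*f1 \<and> p2 = lam*f2)"
    proof
      assume "\<exists>lam. p1 = lam*f1 \<and> p2 = lam*f2"
      then obtain lam where "p1 = lam*f1" "p2 = lam*f2" by blast
      hence "p1*u1 + p2*u2 = lam*(f1*u1 + f2*u2)" by (simp add: distrib_left mult.assoc)
      with phiu Bu show False by simp
    qed
    then obtain \<mu> where mu: "z1 = y1*\<mu>" "z2 = y2*\<mu>"
      using pairwise[OF rA rB y f fx x] by blast
    have main: "\<exists>lam. ma C*x1 + mb C*x2 - x1 = y1*lam \<and> mc C*x1 + md C*x2 - x2 = y2*lam"
      if C: "C \<in> \<Gamma>" for C x1 x2
    proof (cases "islid C")
      case True
      thus ?thesis by (intro exI[of _ 0]) (simp add: islid_def)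
    next
      case nC: False
      obtain v1 v2 where v: "v1 \<noteq> 0 \<or> v2 \<noteq> 0" and fv: "fixv C v1 v2"
        using fixed_vec[OF fr C] by blast
      obtain w1 w2 c1 c2 where w: "w1 \<noteq> 0 \<or> w2 \<noteq> 0" and c: "c1 \<noteq> 0 \<or> c2 \<noteq> 0"
        and rC: "rank1 C w1 w2 c1 c2"
        using rank1_ex[OF fv v nC] by blast
      have "\<exists>\<nu>. w1 = y1*\<nu> \<and> w2 = y2*\<nu>"
      proof -
        obtain a1 a2 where a: "a1 \<noteq> 0 \<or> a2 \<noteq> 0" and fa: "fixv (aff_mult A C) a1 a2"
          using fixed_vec[OF fr cl[OF A(1) C]] by blast
        obtain b1 b2 where b: "b1 \<noteq> 0 \<or> b2 \<noteq> 0" and fb: "fixv (aff_mult B C) b1 b2"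
          using fixed_vec[OF fr cl[OF B(1) C]] by blast
        show ?thesis
        proof (cases "\<exists>\<nu>. w1 = y1*\<nu> \<and> w2 = y2*\<nu>")
          case True thus ?thesis .
        next
          case False
          with pairwise[OF rA rC y f fa a] obtain \<kappa> where ka: "c1 = \<kappa>*f1" "c2 = \<kappa>*f2" by blast
          have cu: "c1*u1 + c2*u2 = 0"
            using phiu ka by (simp add: mult.assoc distrib_left[symmetric])
          show ?thesis
          proof (cases "\<exists>\<nu>. w1 = z1*\<nu> \<and> w2 = z2*\<nu>")
            case True
            then obtain \<nu> where "w1 = z1*\<nu>" "w2 = z2*\<nu>" by blast
            hence "w1 = y1*(\<mu>*\<nu>) \<and> w2 = y2*(\<mu>*\<nu>)" using mu by (simp add: mult.assoc)
            thus ?thesis by blast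
          next
            case False
            with pairwise[OF rB rC z p fb b] obtain \<kappa>' where kb: "c1 = \<kappa>'*p1" "c2 = \<kappa>'*p2" by blast
            have k0: "\<kappa>' \<noteq> 0" using c kb by auto
            have "c1*u1 + c2*u2 = \<kappa>'*(p1*u1 + p2*u2)"
              using kb by (simp add: mult.assoc distrib_left)
            with cu k0 Bu show ?thesis by simp
          qed
        qed
      qed
      then obtain \<nu> where nu: "w1 = y1*\<nu>" "w2 = y2*\<nu>" by blast
      show ?thesis
        by (rule exI[of _ "\<nu>*(c1*x1 + c2*x2)"]) (simp add: rank1_N[OF rC] nu mult.assoc)
    qed
    show ?thesis using y main by blast
  qed
qed

lemma basis_change:
  assumes u: "u1 \<noteq> 0 \<or> u2 \<noteq> 0"
  shows "\<exists>P Q. aff_mult P Q = aff_one \<and> aff_mult Q P = aff_one \<and> ma P = u1 \<and> mc P = u2"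
proof (cases "u1 = 0")
  case False
  let ?P = "\<lparr> ma = u1, mb = 0, mc = u2, md = 1, mr = 0, ms = 0 \<rparr>"
  let ?Q = "\<lparr> ma = inverse u1, mb = 0, mc = - (u2 * inverse u1), md = 1, mr = 0, ms = 0 \<rparr>"
  have "aff_mult ?P ?Q = aff_one" using False by (simp add: aff_mult_def aff_one_def)
  moreover have "aff_mult ?Q ?P = aff_one" using False by (simp add: aff_mult_def aff_one_def mult.assoc)
  ultimately show ?thesis by (intro exI[of _ ?P] exI[of _ ?Q]) simp
next
  case True
  with u have u2: "u2 \<noteq> 0" by simp
  let ?P = "\<lparr> ma = 0, mb = 1, mc = u2, md = 0, mr = 0, ms = 0 \<rparr>"
  let ?Q = "\<lparr> ma = 0, mb = inverse u2, mc = 1, md = 0, mr = 0, ms = 0 \<rparr>"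
  have "aff_mult ?P ?Q = aff_one" using u2 by (simp add: aff_mult_def aff_one_def)
  moreover have "aff_mult ?Q ?P = aff_one" using u2 by (simp add: aff_mult_def aff_one_def)
  ultimately show ?thesis using True by (intro exI[of _ ?P] exI[of _ ?Q]) simp
qed

lemma Aff2H_inj:
  assumes "c \<in> Aff2H" "lin c x = (0,0)"
  shows "x = (0,0)"
proof -
  obtain k where "aff_mult k c = aff_one" using assms(1) by (auto simp: Aff2H_def)
  hence "lin k (lin c x) = x" by (metis lin_mult lin_one)
  thus ?thesis using assms(2) by (simp add: lin_def)
qed

theorem mainTheorem7:
  assumes "subgroup \<Gamma> Aff2H_group"
    and "acts_freely \<Gamma>"
  shows "\<exists>h\<in>Aff2H.
           (\<lambda>g. aff_mult (aff_mult h g) (inv\<^bsub>Aff2H_group\<^esub> h)) ` \<Gamma> \<subseteq> G1 \<or>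
           (\<lambda>g. aff_mult (aff_mult h g) (inv\<^bsub>Aff2H_group\<^esub> h)) ` \<Gamma> \<subseteq> G2"
proof -
  have cl: "\<And>g h. g \<in> \<Gamma> \<Longrightarrow> h \<in> \<Gamma> \<Longrightarrow> aff_mult g h \<in> \<Gamma>"
    using subgroup.m_closed[OF assms(1)] by (simp add: Aff2H_group_def)
  have sub: "\<Gamma> \<subseteq> Aff2H"
    using subgroup.subset[OF assms(1)] by (simp add: Aff2H_group_def)
  obtain u1 u2 where u: "u1 \<noteq> 0 \<or> u2 \<noteq> 0" and alt: "(\<forall>g\<in>\<Gamma>. fixv g u1 u2) \<or>
     (\<forall>g\<in>\<Gamma>. \<forall>x1 x2. \<exists>lam. ma g*x1 + mb g*x2 - x1 = u1*lam \<and> mc g*x1 + md g*x2 - x2 = u2*lam)"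
    using common[OF assms(2) cl] by blast
  obtain P Q where PQ: "aff_mult P Q = aff_one" and QP: "aff_mult Q P = aff_one"
    and Pu: "ma P = u1" "mc P = u2"
    using basis_change[OF u] by blast
  have Q: "Q \<in> Aff2H" and P: "P \<in> Aff2H" and iQ: "inv\<^bsub>Aff2H_group\<^esub> Q = P"
    using Aff2H_inv[OF QP PQ] by auto
  define cj where "cj g = aff_mult (aff_mult Q g) P" for g
  have lincj: "lin (cj g) x = lin Q (lin g (lin P x))" for g x
    by (simp add: cj_def lin_mult)
  have cjA: "cj g \<in> Aff2H" if "g \<in> \<Gamma>" for g
  proof -
    interpret G: group Aff2H_group by (rule Aff2H_group_is_group)
    have "g \<in> carrier Aff2H_group" using sub that by (auto simp: Aff2H_group_def)
    moreover have "Q \<in> carrier Aff2H_group" "P \<in> carrier Aff2H_group"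
      using Q P by (simp_all add: Aff2H_group_def)
    ultimately have "Q \<otimes>\<^bsub>Aff2H_group\<^esub> g \<otimes>\<^bsub>Aff2H_group\<^esub> P \<in> carrier Aff2H_group" by simp
    thus ?thesis by (simp add: Aff2H_group_def cj_def)
  qed
  have LP1: "lin P (1,0) = (u1,u2)" using Pu by (simp add: lin_e1)
  have LQu: "lin Q (u1,u2) = (1,0)"
    using LP1 by (metis lin_mult lin_one QP)
  have LQw: "lin Q (lin P (0,1)) = (0,1)"
    by (metis lin_mult lin_one QP)
  from alt show ?thesis
  proof
    assume fx: "\<forall>g\<in>\<Gamma>. fixv g u1 u2"
    have "cj g \<in> G2" if g: "g \<in> \<Gamma>" for g
    proof -
      have "lin g (u1,u2) = (u1,u2)" using fx g by (simp add: fixv_def lin_def)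
      hence e1: "lin (cj g) (1,0) = (1,0)" using lincj LP1 LQu by simp
      hence m: "ma (cj g) = 1" "mc (cj g) = 0" by (simp_all add: lin_e1)
      have "md (cj g) \<noteq> 0"
      proof
        assume "md (cj g) = 0"
        hence "lin (cj g) (- mb (cj g), 1) = (0,0)" using m by (simp add: lin_def)
        from Aff2H_inj[OF cjA[OF g] this] show False by simp
      qed
      with m show ?thesis by (simp add: G2_def)
    qed
    hence "cj ` \<Gamma> \<subseteq> G2" by blast
    thus ?thesis using Q iQ unfolding cj_def by blast
  next
    assume im: "\<forall>g\<in>\<Gamma>. \<forall>x1 x2. \<exists>lam. ma g*x1 + mb g*x2 - x1 = u1*lam \<and> mc g*x1 + md g*x2 - x2 = u2*lam"
    have "cj g \<in> G1" if g: "g \<in> \<Gamma>" for g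
    proof -
      obtain l where l: "ma g*u1 + mb g*u2 - u1 = u1*l" "mc g*u1 + md g*u2 - u2 = u2*l"
        using im g by blast
      have "lin g (u1,u2) = (u1*(1+l), u2*(1+l))"
        using l by (simp add: lin_def distrib_left) (metis add.commute diff_add_cancel)
      hence "lin (cj g) (1,0) = (1+l, 0)"
        using lincj[of g "(1,0)"] LP1 LQu lin_smul[of Q u1 "1+l" u2] by simp
      hence mc: "mc (cj g) = 0" and ma0: "ma (cj g) = 1 + l" by (simp_all add: lin_e1)
      obtain w1 w2 where w: "lin P (0,1) = (w1,w2)" by fastforce
      obtain k where k: "ma g*w1 + mb g*w2 - w1 = u1*k" "mc g*w1 + md g*w2 - w2 = u2*k"
        using im g by blast
      have "lin g (w1,w2) = (w1 + u1*k, w2 + u2*k)"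
        using k by (simp add: lin_def) (metis add.commute diff_add_cancel)
      hence "lin Q (lin g (w1,w2)) = (fst (lin Q (w1,w2)) + fst (lin Q (u1*k, u2*k)),
          snd (lin Q (w1,w2)) + snd (lin Q (u1*k, u2*k)))"
        using lin_add by simp
      also have "\<dots> = (k, 1)"
        using LQw w lin_smul[of Q u1 k u2] LQu by simp
      finally have "lin (cj g) (0,1) = (k,1)" using lincj[of g "(0,1)"] w by simp
      hence md: "md (cj g) = 1" by (simp add: lin_e2)
      have "ma (cj g) \<noteq> 0"
      proof
        assume "ma (cj g) = 0"
        hence "lin (cj g) (1,0) = (0,0)" using mc by (simp add: lin_e1)
        from Aff2H_inj[OF cjA[OF g] this] show False by simp
      qed
      with mc md show ?thesis by (simp add: G1_def)
    qed
    hence "cj ` \<Gamma> \<subseteq> G1" by blast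
    thus ?thesis using Q iQ unfolding cj_def by blast
  qed
qed

end
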